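(* Let $\Lambda$ be a source-free, finite, primitive, non-empty $k$-graph with shift $\sigma$ on $\Lambda^\infty$, and let $\varphi=(\varphi_1,\dots,\varphi_k)$ be continuous real-valued functions on $\Lambda^\infty$ satisfying $\varphi_i+\varphi_j\circ\sigma_i=\varphi_j+\varphi_i\circ\sigma_j$ for all $i,j$, such that $(\Lambda^\infty,\sigma,\varphi)$ admits a unique solution $(\boldsymbol\lambda^\varphi,\mu^\varphi)$ for the positive eigenvalue problem of the dual of the Ruelle operator. Then $\mu^\varphi(\mathcal{Z}(\lambda))>0$ for every $\lambda\in\Lambda$.
   Context: $k$-graph: countable category $\Lambda$ with degree functor $d:\Lambda\to\mathbb{N}^k$ with unique factorization. finite: each $\Lambda^n=d^{-1}(n)$ finite; source-free: $v\Lambda^n\ne\varnothing$ for every vertex $v$ and $n$; primitive: some $n\ne0$ with $v\Lambda^nw\ne\varnothing$ for all vertices $v,w$. $\Lambda^\infty$: degree-preserving functors $x:\Omega_k\to\Lambda$ ($\Omega_k=\{(m,n):m\le n\}$, $d(m,n)=n-m$), cylinder sets $\mathcal{Z}(\lambda)=\{x:x(0,d(\lambda))=\lambda\}$. Shift: $\sigma_i(x)(m,n)=x(m+\mathbf{e}_i,n+\mathbf{e}_i)$. Ruelle operator $(\mathcal{L}_{T,\psi}f)(x)=\sum_{y\in T^{-1}(x)}e^{\psi(y)}f(y)$ with dual $\mathcal{L}^*$ on finite signed Borel measures. "Admits a unique solution...": unique $(\boldsymbol\lambda,\mu)$ with $\boldsymbol\lambda\in(0,\infty)^k$, $\mu$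 a Borel probability measure, $\mathcal{L}^*_{\sigma_i,\varphi_i}\mu=\lambda_i\mu$ for all $i$. *)

theory Defs
  imports "HOL-Analysis.Analysis" "HOL-Probability.Probability"
begin

text \<open>A k-graph is encoded as a small category whose objects are identified with
their identity morphisms.  The index set \<open>{1..k}\<close> of the degree monoid \<open>\<nat>^k\<close> is a
finite type \<open>'k\<close> (so k = CARD('k)); degrees are functions \<open>'k \<Rightarrow> nat\<close>, ordered
pointwise.\<close>

record ('a, 'k) kgraph =
  mor :: "'a set"
  rng :: "'a \<Rightarrow> 'a"
  src :: "'a \<Rightarrow> 'a"
  cmp :: "'a \<Rightarrow> 'a \<Rightarrow> 'a"
  deg :: "'a \<Rightarrow> 'k \<Rightarrow> nat"

definition deg_add :: "('k \<Rightarrow> nat) \<Rightarrow> ('k \<Rightarrow> nat) \<Rightarrow> 'k \<Rightarrow> nat" where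
  "deg_add m n = (\<lambda>i. m i + n i)"

definition deg_sub :: "('k \<Rightarrow> nat) \<Rightarrow> ('k \<Rightarrow> nat) \<Rightarrow> 'k \<Rightarrow> nat" where
  "deg_sub n m = (\<lambda>i. n i - m i)"

definition deg_zero :: "'k \<Rightarrow> nat" where
  "deg_zero = (\<lambda>i. 0)"

definition unit_vec :: "'k \<Rightarrow> 'k \<Rightarrow> nat" where
  "unit_vec i = (\<lambda>j. if j = i then 1 else 0)"

definition vertices :: "('a, 'k, 'b) kgraph_scheme \<Rightarrow> 'a set" where
  "vertices G = {v \<in> mor G. rng G v = v}"

definition is_kgraph :: "('a, 'k::finite, 'b) kgraph_scheme \<Rightarrow> bool" where
  "is_kgraph G \<longleftrightarrow>
     countable (mor G) \<and>
     (\<forall>l \<in> mor G. rng G l \<in> mor G \<and> src G l \<in> mor G \<and>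
        rng G (rng G l) = rng G l \<and> src G (rng G l) = rng G l \<and>
        rng G (src G l) = src G l \<and> src G (src G l) = src G l \<and>
        cmp G (rng G l) l = l \<and> cmp G l (src G l) = l) \<and>
     (\<forall>l \<in> mor G. \<forall>m \<in> mor G. src G l = rng G m \<longrightarrow>
        cmp G l m \<in> mor G \<and> rng G (cmp G l m) = rng G l \<and> src G (cmp G l m) = src G m \<and>
        deg G (cmp G l m) = deg_add (deg G l) (deg G m)) \<and>
     (\<forall>l \<in> mor G. \<forall>m \<in> mor G. \<forall>n \<in> mor G. src G l = rng G m \<longrightarrow> src G m = rng G n \<longrightarrow>
        cmp G (cmp G l m) n = cmp G l (cmp G m n)) \<and>
     (\<forall>l \<in> mor G. \<forall>m n. deg G l = deg_add m n \<longrightarrow>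
        (\<exists>!(p, q). p \<in> mor G \<and> q \<in> mor G \<and> src G p = rng G q \<and>
             deg G p = m \<and> deg G q = n \<and> cmp G p q = l))"

definition finite_kgraph :: "('a, 'k, 'b) kgraph_scheme \<Rightarrow> bool" where
  "finite_kgraph G \<longleftrightarrow> (\<forall>n. finite {l \<in> mor G. deg G l = n})"

definition source_free :: "('a, 'k, 'b) kgraph_scheme \<Rightarrow> bool" where
  "source_free G \<longleftrightarrow> (\<forall>v \<in> vertices G. \<forall>n. \<exists>l \<in> mor G. rng G l = v \<and> deg G l = n)"

definition primitive :: "('a, 'k, 'b) kgraph_scheme \<Rightarrow> bool" where
  "primitive G \<longleftrightarrow> (\<exists>n. n \<noteq> deg_zero \<and>
     (\<forall>v \<in> vertices G. \<forall>w \<in> vertices G. \<exists>l \<in> mor G. rng G l = v \<and> deg G l = n \<and> src G l = w))"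

text \<open>Infinite paths: degree-preserving functors \<open>\<Omega>_k \<rightarrow> \<Lambda>\<close>, where the morphism
\<open>(m,n)\<close> (\<open>m \<le> n\<close>) of \<open>\<Omega>_k\<close> has range \<open>m\<close>, source \<open>n\<close> and degree \<open>n - m\<close>.\<close>
definition inf_paths :: "('a, 'k, 'b) kgraph_scheme \<Rightarrow> (('k \<Rightarrow> nat) \<Rightarrow> ('k \<Rightarrow> nat) \<Rightarrow> 'a) set" where
  "inf_paths G = {x.
     (\<forall>m n. m \<le> n \<longrightarrow> x m n \<in> mor G \<and> deg G (x m n) = deg_sub n m \<and>
                      rng G (x m n) = x m m \<and> src G (x m n) = x n n) \<and>
     (\<forall>m n p. m \<le> n \<longrightarrow> n \<le> p \<longrightarrow> cmp G (x m n) (x n p) = x m p) \<and>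
     (\<forall>m n. \<not> m \<le> n \<longrightarrow> x m n = undefined)}"

definition shift :: "'k \<Rightarrow> (('k \<Rightarrow> nat) \<Rightarrow> ('k \<Rightarrow> nat) \<Rightarrow> 'a) \<Rightarrow> (('k \<Rightarrow> nat) \<Rightarrow> ('k \<Rightarrow> nat) \<Rightarrow> 'a)" where
  "shift i x = (\<lambda>m n. if m \<le> n then x (deg_add m (unit_vec i)) (deg_add n (unit_vec i)) else undefined)"

definition cylinder :: "('a, 'k, 'b) kgraph_scheme \<Rightarrow> 'a \<Rightarrow> (('k \<Rightarrow> nat) \<Rightarrow> ('k \<Rightarrow> nat) \<Rightarrow> 'a) set" where
  "cylinder G l = {x \<in> inf_paths G. x deg_zero (deg G l) = l}"

definition path_topology :: "('a, 'k, 'b) kgraph_scheme \<Rightarrow> (('k \<Rightarrow> nat) \<Rightarrow> ('k \<Rightarrow> nat) \<Rightarrow> 'a) topology" where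
  "path_topology G = topology_generated_by (cylinder G ` mor G)"

definition path_borel :: "('a, 'k, 'b) kgraph_scheme \<Rightarrow> (('k \<Rightarrow> nat) \<Rightarrow> ('k \<Rightarrow> nat) \<Rightarrow> 'a) measure" where
  "path_borel G = sigma (inf_paths G) {U. openin (path_topology G) U}"

definition ruelle :: "('a, 'k, 'b) kgraph_scheme \<Rightarrow> 'k \<Rightarrow>
    ((('k \<Rightarrow> nat) \<Rightarrow> ('k \<Rightarrow> nat) \<Rightarrow> 'a) \<Rightarrow> real) \<Rightarrow>
    ((('k \<Rightarrow> nat) \<Rightarrow> ('k \<Rightarrow> nat) \<Rightarrow> 'a) \<Rightarrow> real) \<Rightarrow>
    (('k \<Rightarrow> nat) \<Rightarrow> ('k \<Rightarrow> nat) \<Rightarrow> 'a) \<Rightarrow> real" where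
  "ruelle G i psi f x = (\<Sum>y \<in> {y \<in> inf_paths G. shift i y = x}. exp (psi y) * f y)"

text \<open>\<open>(\<lambda>, \<mu>)\<close> solves the eigenvalue problem for the duals of the Ruelle operators:
\<open>\<lambda> \<in> (0,\<infinity>)^k\<close>, \<open>\<mu>\<close> a Borel probability measure on \<open>\<Lambda>^\<infinity>\<close>, and
\<open>\<L>^*_{\<sigma>_i,\<phi>_i} \<mu> = \<lambda>_i \<mu>\<close>, i.e. \<open>\<mu>(\<L>_{\<sigma>_i,\<phi>_i} f) = \<lambda>_i \<mu>(f)\<close> for all \<open>f \<in> C(\<Lambda>^\<infinity>)\<close>.\<close>
definition is_eigen_solution :: "('a, 'k, 'b) kgraph_scheme \<Rightarrow>
    ('k \<Rightarrow> (('k \<Rightarrow> nat) \<Rightarrow> ('k \<Rightarrow> nat) \<Rightarrow> 'a) \<Rightarrow> real) \<Rightarrow>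
    ('k \<Rightarrow> real) \<times> (('k \<Rightarrow> nat) \<Rightarrow> ('k \<Rightarrow> nat) \<Rightarrow> 'a) measure \<Rightarrow> bool" where
  "is_eigen_solution G phi s \<longleftrightarrow>
     (case s of (lam, \<mu>) \<Rightarrow>
       (\<forall>i. lam i > 0) \<and> prob_space \<mu> \<and> sets \<mu> = sets (path_borel G) \<and>
       (\<forall>i f. continuous_map (path_topology G) euclideanreal f \<longrightarrow>
          (\<integral>x. ruelle G i (phi i) f x \<partial>\<mu>) = lam i * (\<integral>x. f x \<partial>\<mu>)))"

end

theory Submission
  imports Defs
begin


lemma deg_add_sub: "m \<le> n \<Longrightarrow> deg_add m (deg_sub n m) = n"
  by (auto simp: deg_add_def deg_sub_def fun_eq_iff le_fun_def)
lemma deg_sub_add: "deg_sub (deg_add m n) m = n"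
  by (auto simp: deg_add_def deg_sub_def fun_eq_iff)
lemma deg_add_cancel: "deg_add m a = deg_add m b \<Longrightarrow> a = b"
  by (auto simp: deg_add_def fun_eq_iff)
lemma deg_add_comm: "deg_add m n = deg_add n m"
  by (auto simp: deg_add_def fun_eq_iff)
lemma deg_add_assoc: "deg_add (deg_add a b) c = deg_add a (deg_add b c)"
  by (auto simp: deg_add_def fun_eq_iff)
lemma deg_add_zero[simp]: "deg_add deg_zero n = n" "deg_add n deg_zero = n"
  by (auto simp: deg_add_def deg_zero_def fun_eq_iff)
lemma deg_sub_zero[simp]: "deg_sub n deg_zero = n" "deg_sub n n = deg_zero"
  by (auto simp: deg_sub_def deg_zero_def fun_eq_iff)
lemma deg_zero_le[simp]: "deg_zero \<le> n"
  by (auto simp: deg_zero_def le_fun_def)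
lemma le_deg_add[simp]: "m \<le> deg_add m n" "m \<le> deg_add n m"
  by (auto simp: deg_add_def le_fun_def)
lemma deg_add_mono: "m \<le> n \<Longrightarrow> deg_add m u \<le> deg_add n u"
  by (auto simp: deg_add_def le_fun_def)
lemma deg_add_self: "deg_add n n = n \<Longrightarrow> n = deg_zero"
  by (auto simp: deg_add_def deg_zero_def fun_eq_iff)
lemma deg_sub_add_sub: "m \<le> n \<Longrightarrow> n \<le> p \<Longrightarrow> deg_add (deg_sub n m) (deg_sub p n) = deg_sub p m"
  by (auto simp: deg_add_def deg_sub_def fun_eq_iff le_fun_def)
lemma deg_sub_shift: "deg_sub (deg_add n u) (deg_add m u) = deg_sub n m"
  by (auto simp: deg_add_def deg_sub_def fun_eq_iff)

context
  fixes G :: "('a, 'k::finite, 'b) kgraph_scheme"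
  assumes kg: "is_kgraph G"
begin

lemma K1: assumes "l \<in> mor G"
  shows "rng G l \<in> mor G" "src G l \<in> mor G" "rng G (rng G l) = rng G l" "src G (rng G l) = rng G l"
   "rng G (src G l) = src G l" "src G (src G l) = src G l" "cmp G (rng G l) l = l" "cmp G l (src G l) = l"
  using kg assms unfolding is_kgraph_def by blast+

lemma K2: assumes "l \<in> mor G" "m \<in> mor G" "src G l = rng G m"
  shows "cmp G l m \<in> mor G" "rng G (cmp G l m) = rng G l" "src G (cmp G l m) = src G m"
    "deg G (cmp G l m) = deg_add (deg G l) (deg G m)"
  using kg assms unfolding is_kgraph_def by blast+

lemma K3: assumes "l \<in> mor G" "m \<in> mor G" "n \<in> mor G" "src G l = rng G m" "src G m = rng G n"
  shows "cmp G (cmp G l m) n = cmp G l (cmp G m n)"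
  using kg assms unfolding is_kgraph_def by blast

lemma K4ex: assumes "l \<in> mor G" "deg G l = deg_add m n"
  shows "\<exists>p q. p \<in> mor G \<and> q \<in> mor G \<and> src G p = rng G q \<and> deg G p = m \<and> deg G q = n \<and> cmp G p q = l"
proof -
  have "\<exists>!(p, q). p \<in> mor G \<and> q \<in> mor G \<and> src G p = rng G q \<and>
             deg G p = m \<and> deg G q = n \<and> cmp G p q = l"
    using kg assms unfolding is_kgraph_def by blast
  then show ?thesis by (auto dest: ex1_implies_ex)
qed

lemma fact_unique:
  assumes "p \<in> mor G" "q \<in> mor G" "src G p = rng G q" "p' \<in> mor G" "q' \<in> mor G" "src G p' = rng G q'"
    "deg G p = deg G p'" "cmp G p q = cmp G p' q'"
  shows "p = p' \<and> q = q'"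
proof -
  let ?l = "cmp G p q"
  have l: "?l \<in> mor G" "deg G ?l = deg_add (deg G p) (deg G q)" using K2 assms(1-3) by blast+
  have "deg G (cmp G p' q') = deg_add (deg G p') (deg G q')" using K2 assms by blast
  with l assms have dq: "deg G q = deg G q'" by (metis deg_add_cancel)
  have "\<exists>!(p, q'). p \<in> mor G \<and> q' \<in> mor G \<and> src G p = rng G q' \<and>
             deg G p = deg G p' \<and> deg G q' = deg G q \<and> cmp G p q' = ?l"
  proof -
    have "\<forall>l \<in> mor G. \<forall>m n. deg G l = deg_add m n \<longrightarrow>
        (\<exists>!(p, q). p \<in> mor G \<and> q \<in> mor G \<and> src G p = rng G q \<and>
             deg G p = m \<and> deg G q = n \<and> cmp G p q = l)" using kg unfolding is_kgraph_def by blast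
    then show ?thesis using l assms by simp
  qed
  then obtain a where a: "\<And>z. (case z of (p, q') \<Rightarrow> p \<in> mor G \<and> q' \<in> mor G \<and> src G p = rng G q' \<and>
             deg G p = deg G p' \<and> deg G q' = deg G q \<and> cmp G p q' = ?l) \<Longrightarrow> z = a"
    unfolding Ex1_def by blast
  have "(p, q) = a" by (rule a) (use assms in simp)
  moreover have "(p', q') = a" by (rule a) (use assms dq in simp)
  ultimately show ?thesis by (metis prod.inject)
qed

lemma vertex_deg: assumes "v \<in> mor G" "rng G v = v" shows "deg G v = deg_zero"
proof -
  have "src G v = v" using K1[OF assms(1)] assms by metis
  then have "deg G (cmp G v v) = deg_add (deg G v) (deg G v)" using K2 assms by metis
  moreover have "cmp G v v = v" using K1[OF assms(1)] assms by metis
  ultimately show ?thesis by (metis deg_add_self)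
qed

lemma deg_zero_vertex: assumes "l \<in> mor G" "deg G l = deg_zero" shows "rng G l = l" "src G l = l"
proof -
  have dr: "deg G (rng G l) = deg_zero" using vertex_deg K1 assms by metis
  have ds: "deg G (src G l) = deg_zero" using vertex_deg K1 assms by metis
  have "rng G l = l \<and> l = l" using fact_unique[of "rng G l" l l "src G l"] K1[OF assms(1)] assms dr by metis
  then show "rng G l = l" by simp
  have "l = src G l" using fact_unique[of "rng G l" l l "src G l"] K1[OF assms(1)] assms dr by metis
  then show "src G l = l" by simp
qed

lemma IP: assumes "x \<in> inf_paths G" "m \<le> n"
  shows "x m n \<in> mor G" "deg G (x m n) = deg_sub n m" "rng G (x m n) = x m m" "src G (x m n) = x n n"
  using assms unfolding inf_paths_def by blast+

lemma IPc: assumes "x \<in> inf_paths G" "m \<le> n" "n \<le> p"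
  shows "cmp G (x m n) (x n p) = x m p"
  using assms unfolding inf_paths_def by blast

lemma IPu: assumes "x \<in> inf_paths G" "\<not> m \<le> n" shows "x m n = undefined"
  using assms unfolding inf_paths_def by blast

end


definition pre :: "('a, 'k, 'b) kgraph_scheme \<Rightarrow> 'a \<Rightarrow> ('k \<Rightarrow> nat) \<Rightarrow> 'a" where
  "pre G l n = (THE p. \<exists>q. p \<in> mor G \<and> q \<in> mor G \<and> src G p = rng G q \<and> deg G p = n \<and> cmp G p q = l)"

definition mid :: "('a, 'k, 'b) kgraph_scheme \<Rightarrow> (('k \<Rightarrow> nat) \<Rightarrow> 'a) \<Rightarrow> ('k \<Rightarrow> nat) \<Rightarrow> ('k \<Rightarrow> nat) \<Rightarrow> 'a" where
  "mid G P m n = (THE q. q \<in> mor G \<and> src G (P m) = rng G q \<and> cmp G (P m) q = P n)"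

definition pathof :: "('a, 'k, 'b) kgraph_scheme \<Rightarrow> (('k \<Rightarrow> nat) \<Rightarrow> 'a) \<Rightarrow> ('k \<Rightarrow> nat) \<Rightarrow> ('k \<Rightarrow> nat) \<Rightarrow> 'a" where
  "pathof G P = (\<lambda>m n. if m \<le> n then mid G P m n else undefined)"

context
  fixes G :: "('a, 'k::finite, 'b) kgraph_scheme"
  assumes kg: "is_kgraph G"
begin

lemma pre_eq: assumes "p \<in> mor G" "q \<in> mor G" "src G p = rng G q" "cmp G p q = l"
  shows "pre G l (deg G p) = p"
  unfolding pre_def
proof (rule the_equality)
  show "\<exists>q. p \<in> mor G \<and> q \<in> mor G \<and> src G p = rng G q \<and> deg G p = deg G p \<and> cmp G p q = l"
    using assms by blast
next
  fix p' assume "\<exists>q. p' \<in> mor G \<and> q \<in> mor G \<and> src G p' = rng G q \<and> deg G p' = deg G p \<and> cmp G p' q = l"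
  then obtain q' where h: "p' \<in> mor G" "q' \<in> mor G" "src G p' = rng G q'" "deg G p' = deg G p" "cmp G p' q' = l" by blast
  have "cmp G p' q' = cmp G p q" using h(5) assms(4) by simp
  then show "p' = p" using fact_unique[OF kg h(1-3) assms(1-3) h(4)] by blast
qed

lemma pre_ex: assumes "l \<in> mor G" "n \<le> deg G l"
  shows "\<exists>q. pre G l n \<in> mor G \<and> q \<in> mor G \<and> src G (pre G l n) = rng G q \<and> deg G (pre G l n) = n
     \<and> deg G q = deg_sub (deg G l) n \<and> cmp G (pre G l n) q = l"
proof -
  have "deg G l = deg_add n (deg_sub (deg G l) n)" using deg_add_sub[OF assms(2)] by simp
  then obtain p q where pq: "p \<in> mor G" "q \<in> mor G" "src G p = rng G q" "deg G p = n"
    "deg G q = deg_sub (deg G l) n" "cmp G p q = l" using K4ex[OF kg assms(1)] by blast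
  then have "pre G l (deg G p) = p" using pre_eq by blast
  then have "pre G l n = p" using pq(4) by simp
  then show ?thesis using pq by blast
qed

lemma mid_eq: assumes "P m \<in> mor G" "q \<in> mor G" "src G (P m) = rng G q" "cmp G (P m) q = P n"
  shows "mid G P m n = q"
  unfolding mid_def
proof (rule the_equality)
  show "q \<in> mor G \<and> src G (P m) = rng G q \<and> cmp G (P m) q = P n" using assms by blast
next
  fix q' assume h: "q' \<in> mor G \<and> src G (P m) = rng G q' \<and> cmp G (P m) q' = P n"
  then have "cmp G (P m) q' = cmp G (P m) q" using assms(4) by simp
  then show "q' = q" using fact_unique[OF kg assms(1) _ _ assms(1-3) refl] h by blast
qed

lemma pathof_in:
  assumes P1: "\<And>n. P n \<in> mor G" and P2: "\<And>n. deg G (P n) = n"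
    and P3: "\<And>n n'. n \<le> n' \<Longrightarrow> \<exists>q \<in> mor G. src G (P n) = rng G q \<and> cmp G (P n) q = P n'"
  shows "pathof G P \<in> inf_paths G" "pathof G P deg_zero n = P n"
proof -
  let ?x = "pathof G P"
  have diag: "?x m m = src G (P m)" for m
  proof -
    have "mid G P m m = src G (P m)"
      by (rule mid_eq[OF P1 K1(2)[OF kg P1]]) (simp_all add: K1(5,8)[OF kg P1])
    then show ?thesis unfolding pathof_def by simp
  qed
  have gen: "?x m n \<in> mor G \<and> src G (P m) = rng G (?x m n) \<and> cmp G (P m) (?x m n) = P n
     \<and> deg G (?x m n) = deg_sub n m \<and> src G (?x m n) = src G (P n)" if mn: "m \<le> n" for m n
  proof -
    obtain q where q: "q \<in> mor G" "src G (P m) = rng G q" "cmp G (P m) q = P n" using P3[OF mn] by blast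
    have "mid G P m n = q" by (rule mid_eq[OF P1 q])
    then have xq: "?x m n = q" using mn unfolding pathof_def by simp
    have "deg G (cmp G (P m) q) = deg_add (deg G (P m)) (deg G q)" by (rule K2(4)[OF kg P1 q(1,2)])
    then have "n = deg_add m (deg G q)" using q(3) P2 by simp
    then have dq: "deg G q = deg_sub n m" using deg_sub_add[of m "deg G q"] by simp
    have "src G (cmp G (P m) q) = src G q" by (rule K2(3)[OF kg P1 q(1,2)])
    then have sq: "src G q = src G (P n)" using q(3) by simp
    show ?thesis using q xq dq sq by simp
  qed
  show "?x \<in> inf_paths G"
    unfolding inf_paths_def
  proof (intro CollectI conjI allI impI)
    fix m n :: "'k \<Rightarrow> nat" assume mn: "m \<le> n"
    note g = gen[OF mn]
    show "?x m n \<in> mor G" "deg G (?x m n) = deg_sub n m" using g by auto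
    show "rng G (?x m n) = ?x m m" using g diag by simp
    show "src G (?x m n) = ?x n n" using g diag by simp
  next
    fix m n p :: "'k \<Rightarrow> nat" assume mn: "m \<le> n" and np: "n \<le> p"
    note g1 = gen[OF mn] and g2 = gen[OF np]
    have mp: "m \<le> p" using mn np by (rule order_trans)
    have s: "src G (?x m n) = rng G (?x n p)" using g1 g2 by simp
    have "P p = cmp G (cmp G (P m) (?x m n)) (?x n p)" using g1 g2 by simp
    also have "\<dots> = cmp G (P m) (cmp G (?x m n) (?x n p))"
    proof (rule K3[OF kg P1])
      show "?x m n \<in> mor G" "?x n p \<in> mor G" using g1 g2 by auto
      show "src G (P m) = rng G (?x m n)" using g1 by simp
      show "src G (?x m n) = rng G (?x n p)" by (rule s)
    qed
    finally have e: "cmp G (P m) (cmp G (?x m n) (?x n p)) = P p" by simp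
    have m1: "?x m n \<in> mor G" and m2: "?x n p \<in> mor G" using g1 g2 by auto
    have "mid G P m p = cmp G (?x m n) (?x n p)"
    proof (rule mid_eq[OF P1])
      show "cmp G (?x m n) (?x n p) \<in> mor G" by (rule K2(1)[OF kg m1 m2 s])
      have "rng G (cmp G (?x m n) (?x n p)) = rng G (?x m n)" by (rule K2(2)[OF kg m1 m2 s])
      then show "src G (P m) = rng G (cmp G (?x m n) (?x n p))" using g1 by simp
      show "cmp G (P m) (cmp G (?x m n) (?x n p)) = P p" by (rule e)
    qed
    then show "cmp G (?x m n) (?x n p) = ?x m p" using mp unfolding pathof_def by simp
  next
    fix m n :: "'k \<Rightarrow> nat" assume "\<not> m \<le> n"
    then show "?x m n = undefined" unfolding pathof_def by simp
  qed
  have v: "rng G (P deg_zero) = P deg_zero" "src G (P deg_zero) = P deg_zero"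
    using deg_zero_vertex[OF kg P1 P2[of deg_zero]] by auto
  have r: "rng G (P n) = P deg_zero"
  proof -
    obtain q where q: "q \<in> mor G" "src G (P deg_zero) = rng G q" "cmp G (P deg_zero) q = P n"
      using P3[of deg_zero n] by auto
    have "rng G (cmp G (P deg_zero) q) = rng G (P deg_zero)" by (rule K2(2)[OF kg P1 q(1,2)])
    then show ?thesis using q(3) v by simp
  qed
  have "mid G P deg_zero n = P n"
  proof (rule mid_eq[OF P1 P1])
    show "src G (P deg_zero) = rng G (P n)" using v r by simp
    show "cmp G (P deg_zero) (P n) = P n" using K1(7)[OF kg P1[of n]] r by simp
  qed
  then show "?x deg_zero n = P n" unfolding pathof_def by simp
qed

lemma inf_paths_eq: assumes "x \<in> inf_paths G" "y \<in> inf_paths G" "\<And>n. x deg_zero n = y deg_zero n"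
  shows "x = y"
proof (intro ext)
  fix m n
  show "x m n = y m n"
  proof (cases "m \<le> n")
    case True
    have gen: "mid G (\<lambda>n. z deg_zero n) m n = z m n" if z: "z \<in> inf_paths G" for z
    proof (rule mid_eq)
      show "z deg_zero m \<in> mor G" using IP(1)[OF kg z deg_zero_le] .
      show "z m n \<in> mor G" using IP(1)[OF kg z True] .
      show "src G (z deg_zero m) = rng G (z m n)" using IP(4)[OF kg z deg_zero_le] IP(3)[OF kg z True] by simp
      show "cmp G (z deg_zero m) (z m n) = z deg_zero n" using IPc[OF kg z deg_zero_le True] .
    qed
    note gen[OF assms(1)] gen[OF assms(2)]
    moreover have "mid G (\<lambda>n. x deg_zero n) m n = mid G (\<lambda>n. y deg_zero n) m n" using assms(3) by simp
    ultimately show ?thesis by simp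
  next
    case False then show ?thesis using IPu[OF kg assms(1) False] IPu[OF kg assms(2) False] by simp
  qed
qed

end


definition prep :: "('a, 'k, 'b) kgraph_scheme \<Rightarrow> 'a \<Rightarrow> (('k \<Rightarrow> nat) \<Rightarrow> ('k \<Rightarrow> nat) \<Rightarrow> 'a) \<Rightarrow> ('k \<Rightarrow> nat) \<Rightarrow> ('k \<Rightarrow> nat) \<Rightarrow> 'a" where
  "prep G e x = pathof G (\<lambda>n. pre G (cmp G e (x deg_zero n)) n)"

context
  fixes G :: "('a, 'k::finite, 'b) kgraph_scheme"
  assumes kg: "is_kgraph G"
begin

lemma prep_props:
  assumes x: "x \<in> inf_paths G" and e: "e \<in> mor G" "src G e = x deg_zero deg_zero"
  shows "prep G e x \<in> inf_paths G"
    "\<And>n. prep G e x deg_zero (deg_add n (deg G e)) = cmp G e (x deg_zero n)"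
    "\<And>m n. m \<le> n \<Longrightarrow> prep G e x (deg_add m (deg G e)) (deg_add n (deg G e)) = x m n"
proof -
  define W where "W n = cmp G e (x deg_zero n)" for n
  define P where "P n = pre G (W n) n" for n
  have x0: "x deg_zero n \<in> mor G" "deg G (x deg_zero n) = n" "rng G (x deg_zero n) = x deg_zero deg_zero"
    "src G (x deg_zero n) = x n n" for n
    using IP[OF kg x, of deg_zero n] by auto
  have W: "W n \<in> mor G" "deg G (W n) = deg_add (deg G e) n" "src G (W n) = x n n" for n
    using K2[OF kg e(1) x0(1)] e x0 unfolding W_def by auto
  have Wc: "W n' = cmp G (W n) (x n n')" if "n \<le> n'" for n n'
  proof -
    have "W n' = cmp G e (cmp G (x deg_zero n) (x n n'))" unfolding W_def using IPc[OF kg x, of deg_zero n n'] that by simp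
    also have "\<dots> = cmp G (W n) (x n n')" unfolding W_def
      using K3[OF kg e(1) x0(1), of "x n n'"] e x0 IP[OF kg x that] by simp
    finally show ?thesis .
  qed
  have Pex: "\<exists>r. P n \<in> mor G \<and> r \<in> mor G \<and> src G (P n) = rng G r \<and> deg G (P n) = n \<and> cmp G (P n) r = W n" for n
  proof -
    have h: "n \<le> deg G (W n)" using W(2)[of n] by simp
    show ?thesis using pre_ex[OF kg W(1) h] unfolding P_def by blast
  qed
  have P1: "P n \<in> mor G" and P2: "deg G (P n) = n" for n using Pex by blast+
  have P3: "\<exists>q \<in> mor G. src G (P n) = rng G q \<and> cmp G (P n) q = P n'" if nn: "n \<le> n'" for n n'
  proof -
    obtain r where r: "r \<in> mor G" "src G (P n) = rng G r" "cmp G (P n) r = W n" using Pex by blast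
    obtain r' where r': "r' \<in> mor G" "src G (P n') = rng G r'" "cmp G (P n') r' = W n'" using Pex by blast
    have "deg G (P n') = deg_add n (deg_sub n' n)" using P2 deg_add_sub nn by metis
    then obtain a b where ab: "a \<in> mor G" "b \<in> mor G" "src G a = rng G b" "deg G a = n" "cmp G a b = P n'"
      using K4ex[OF kg P1] by blast
    have srW: "src G (W n) = rng G (x n n')" using W IP[OF kg x nn] by simp
    have sr: "src G r = src G (W n)" using K2(3)[OF kg P1 r(1,2)] r(3) by simp
    have e1: "W n' = cmp G (P n) (cmp G r (x n n'))"
    proof -
      have "W n' = cmp G (cmp G (P n) r) (x n n')" using Wc[OF nn] r(3) by simp
      also have "\<dots> = cmp G (P n) (cmp G r (x n n'))"
        by (rule K3[OF kg P1 r(1) IP(1)[OF kg x nn] r(2)]) (use sr srW in simp)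
      finally show ?thesis .
    qed
    have sb: "src G b = src G (P n')" using K2(3)[OF kg ab(1,2,3)] ab(5) by simp
    have e2: "W n' = cmp G a (cmp G b r')"
      using r' ab K3[OF kg ab(1,2) r'(1) ab(3)] sb by simp
    have "a = P n"
      using fact_unique[OF kg ab(1) K2(1)[OF kg ab(2) r'(1)] _ P1 K2(1)[OF kg r(1) IP(1)[OF kg x nn]]]
        K2(2)[OF kg ab(2) r'(1)] K2(2)[OF kg r(1) IP(1)[OF kg x nn]] ab r' r sb sr srW e1 e2 P2
      by auto
    then show ?thesis using ab by auto
  qed
  have PW: "P (deg_add n (deg G e)) = W n" for n
  proof -
    have "pre G (W (deg_add n (deg G e))) (deg G (W n)) = W n"
      by (rule pre_eq[OF kg W(1) IP(1)[OF kg x, of n "deg_add n (deg G e)"]])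
         (use W IP[OF kg x, of n "deg_add n (deg G e)"] Wc[of n "deg_add n (deg G e)"] in auto)
    then show ?thesis unfolding P_def using W(2) deg_add_comm by metis
  qed
  have prep_eq: "prep G e x = pathof G P" unfolding prep_def P_def W_def by simp
  show "prep G e x \<in> inf_paths G" using pathof_in(1)[OF kg P1 P2 P3] prep_eq by simp
  show "prep G e x deg_zero (deg_add n (deg G e)) = cmp G e (x deg_zero n)" for n
    using pathof_in(2)[OF kg P1 P2 P3] prep_eq PW W_def by simp
  show "prep G e x (deg_add m (deg G e)) (deg_add n (deg G e)) = x m n" if mn: "m \<le> n" for m n
  proof -
    have "mid G P (deg_add m (deg G e)) (deg_add n (deg G e)) = x m n"
      by (rule mid_eq[OF kg P1]) (use PW W IP[OF kg x mn] Wc[OF mn] in auto)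
    then show ?thesis using prep_eq deg_add_mono[OF mn] unfolding pathof_def by simp
  qed
qed

end


context
  fixes G :: "('a, 'k::finite, 'b) kgraph_scheme"
  assumes kg: "is_kgraph G"
begin

lemma shift_at: "m \<le> n \<Longrightarrow> shift i y m n = y (deg_add m (unit_vec i)) (deg_add n (unit_vec i))"
  unfolding shift_def by simp

lemma preimage_inj:
  assumes y: "y \<in> inf_paths G" "shift i y = x" and y': "y' \<in> inf_paths G" "shift i y' = x"
    and eq: "y deg_zero (unit_vec i) = y' deg_zero (unit_vec i)"
  shows "y = y'"
proof (rule inf_paths_eq[OF kg y(1) y'(1)])
  fix n
  let ?u = "unit_vec i"
  have key: "z deg_zero n = pre G (cmp G (z deg_zero ?u) (x deg_zero n)) n"
    if z: "z \<in> inf_paths G" "shift i z = x" for z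
  proof -
    have n1: "n \<le> deg_add n ?u" by simp
    have "z deg_zero (deg_add n ?u) = cmp G (z deg_zero ?u) (z ?u (deg_add n ?u))"
      using IPc[OF kg z(1), of deg_zero ?u "deg_add n ?u"] by simp
    moreover have "z ?u (deg_add n ?u) = x deg_zero n"
      using shift_at[of deg_zero n i z] z(2) by simp
    moreover have "pre G (z deg_zero (deg_add n ?u)) (deg G (z deg_zero n)) = z deg_zero n"
    proof (rule pre_eq[OF kg])
      show "z deg_zero n \<in> mor G" using IP(1)[OF kg z(1), of deg_zero n] by simp
      show "z n (deg_add n ?u) \<in> mor G" using IP(1)[OF kg z(1) n1] .
      show "src G (z deg_zero n) = rng G (z n (deg_add n ?u))"
        using IP(4)[OF kg z(1), of deg_zero n] IP(3)[OF kg z(1) n1] by simp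
      show "cmp G (z deg_zero n) (z n (deg_add n ?u)) = z deg_zero (deg_add n ?u)"
        using IPc[OF kg z(1), of deg_zero n "deg_add n ?u"] n1 by simp
    qed
    moreover have "deg G (z deg_zero n) = n" using IP[OF kg z(1)] by simp
    ultimately show ?thesis by simp
  qed
  have k1: "y deg_zero n = pre G (cmp G (y deg_zero ?u) (x deg_zero n)) n" by (rule key[OF y])
  have k2: "y' deg_zero n = pre G (cmp G (y' deg_zero ?u) (x deg_zero n)) n" by (rule key[OF y'])
  show "y deg_zero n = y' deg_zero n" unfolding k1 k2 eq ..
qed

lemma preimages_finite:
  assumes fin: "finite_kgraph G"
  shows "finite {y \<in> inf_paths G. shift i y = x}"
proof -
  let ?u = "unit_vec i"
  have "inj_on (\<lambda>y. y deg_zero ?u) {y \<in> inf_paths G. shift i y = x}"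
    by (rule inj_onI) (use preimage_inj in blast)
  moreover have "(\<lambda>y. y deg_zero ?u) ` {y \<in> inf_paths G. shift i y = x} \<subseteq> {l \<in> mor G. deg G l = ?u}"
  proof
    fix l assume "l \<in> (\<lambda>y. y deg_zero ?u) ` {y \<in> inf_paths G. shift i y = x}"
    then obtain y where y: "y \<in> inf_paths G" "l = y deg_zero ?u" by blast
    show "l \<in> {l \<in> mor G. deg G l = ?u}" using IP(1,2)[OF kg y(1), of deg_zero ?u] y(2) by simp
  qed
  moreover have "finite {l \<in> mor G. deg G l = ?u}" using fin unfolding finite_kgraph_def by blast
  ultimately show ?thesis by (meson finite_imageD finite_subset)
qed

lemma preimage_cyl:
  assumes lam: "e \<in> mor G" "l' \<in> mor G" "src G e = rng G l'" "deg G e = unit_vec i"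
    and x: "x \<in> inf_paths G"
  shows "{y \<in> inf_paths G. shift i y = x} \<inter> cylinder G (cmp G e l') =
     (if x \<in> cylinder G l' then {prep G e x} else {})"
proof -
  let ?u = "unit_vec i" and ?l = "cmp G e l'"
  have dl: "deg G ?l = deg_add ?u (deg G l')" using K2(4)[OF kg lam(1-3)] lam(4) by simp
  have B: "y deg_zero ?u = e \<and> x \<in> cylinder G l'" if y: "y \<in> inf_paths G" "shift i y = x" "y \<in> cylinder G ?l" for y
  proof -
    have c: "y deg_zero (deg G ?l) = ?l" using y(3) unfolding cylinder_def by simp
    have ul: "?u \<le> deg G ?l" using dl by simp
    have cc: "cmp G (y deg_zero ?u) (y ?u (deg G ?l)) = cmp G e l'"
      using IPc[OF kg y(1) deg_zero_le ul] c by simp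
    have "y deg_zero ?u = e \<and> y ?u (deg G ?l) = l'"
    proof (rule fact_unique[OF kg _ _ _ lam(1,2,3) _ cc])
      show "y deg_zero ?u \<in> mor G" using IP(1)[OF kg y(1) deg_zero_le] .
      show "y ?u (deg G ?l) \<in> mor G" using IP(1)[OF kg y(1) ul] .
      show "src G (y deg_zero ?u) = rng G (y ?u (deg G ?l))"
        using IP(4)[OF kg y(1) deg_zero_le] IP(3)[OF kg y(1) ul] by simp
      show "deg G (y deg_zero ?u) = deg G e" using IP(2)[OF kg y(1) deg_zero_le] lam(4) by simp
    qed
    moreover have "x deg_zero (deg G l') = y ?u (deg G ?l)"
    proof -
      have "x deg_zero (deg G l') = y (deg_add deg_zero ?u) (deg_add (deg G l') ?u)"
        using shift_at[of deg_zero "deg G l'" i y] y(2) by simp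
      also have "deg_add (deg G l') ?u = deg G ?l" using dl deg_add_comm by metis
      finally show ?thesis by simp
    qed
    ultimately show ?thesis using x unfolding cylinder_def by simp
  qed
  show ?thesis
  proof (cases "x \<in> cylinder G l'")
    case True
    then have xl: "x deg_zero (deg G l') = l'" unfolding cylinder_def by simp
    have se: "src G e = x deg_zero deg_zero"
      using lam(3) IP(3)[OF kg x, of deg_zero "deg G l'"] xl by simp
    note pp = prep_props[OF kg x lam(1) se]
    have sh: "shift i (prep G e x) = x"
    proof (intro ext)
      fix m n show "shift i (prep G e x) m n = x m n"
        using pp(3)[of m n] lam(4) IPu[OF kg x, of m n] unfolding shift_def by auto
    qed
    have "prep G e x deg_zero (deg G ?l) = ?l"
    proof -
      have "deg G ?l = deg_add (deg G l') (deg G e)" using dl lam(4) deg_add_comm by metis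
      then show ?thesis using pp(2)[of "deg G l'"] xl by simp
    qed
    then have inP: "prep G e x \<in> {y \<in> inf_paths G. shift i y = x} \<inter> cylinder G ?l"
      using pp(1) sh unfolding cylinder_def by simp
    have p0: "prep G e x deg_zero ?u = e"
      using pp(2)[of deg_zero] lam K1(8)[OF kg lam(1)] se by simp
    have "y = prep G e x" if yy: "y \<in> {y \<in> inf_paths G. shift i y = x} \<inter> cylinder G ?l" for y
    proof -
      have y1: "y \<in> inf_paths G" "shift i y = x" "y \<in> cylinder G ?l" using yy by auto
      have "y deg_zero ?u = e" using B[OF y1] by blast
      then show ?thesis using preimage_inj[OF y1(1,2) pp(1) sh] p0 by simp
    qed
    then have "{y \<in> inf_paths G. shift i y = x} \<inter> cylinder G ?l = {prep G e x}" using inP by blast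
    then show ?thesis using True by simp
  next
    case False
    have "{y \<in> inf_paths G. shift i y = x} \<inter> cylinder G ?l = {}"
    proof (rule ccontr)
      assume "{y \<in> inf_paths G. shift i y = x} \<inter> cylinder G ?l \<noteq> {}"
      then obtain y where "y \<in> inf_paths G" "shift i y = x" "y \<in> cylinder G ?l" by blast
      then show False using B False by blast
    qed
    then show ?thesis using False by simp
  qed
qed

lemma ruelle_ind:
  assumes fin: "finite_kgraph G"
    and lam: "e \<in> mor G" "l' \<in> mor G" "src G e = rng G l'" "deg G e = unit_vec i"
    and x: "x \<in> inf_paths G"
  shows "ruelle G i psi (\<lambda>y. indicator (cylinder G (cmp G e l')) y * exp (- psi y)) x
     = indicator (cylinder G l') x"
proof -
  let ?T = "{y \<in> inf_paths G. shift i y = x}"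
  have "ruelle G i psi (\<lambda>y. indicator (cylinder G (cmp G e l')) y * exp (- psi y)) x
      = (\<Sum>y\<in>?T. indicator (cylinder G (cmp G e l')) y)"
    unfolding ruelle_def by (intro sum.cong) (auto simp: exp_minus field_simps)
  also have "\<dots> = (\<Sum>y\<in>?T \<inter> cylinder G (cmp G e l'). (1::real))"
  proof -
    have "(\<Sum>y\<in>?T. indicator (cylinder G (cmp G e l')) y) = (\<Sum>y\<in>?T. if y \<in> cylinder G (cmp G e l') then 1 else (0::real))"
      by (rule sum.cong) (auto simp: indicator_def)
    then show ?thesis
      using sum.inter_restrict[OF preimages_finite[OF fin, of i x], of "\<lambda>_. 1::real" "cylinder G (cmp G e l')"]
      by simp
  qed
  also have "\<dots> = indicator (cylinder G l') x"
    using preimage_cyl[OF lam x] by (simp add: indicator_def)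
  finally show ?thesis .
qed

end


context
  fixes G :: "('a, 'k::finite, 'b) kgraph_scheme"
  assumes kg: "is_kgraph G"
begin

lemma cyl_sub: "cylinder G l \<subseteq> inf_paths G" unfolding cylinder_def by auto

lemma topspace_path: "topspace (path_topology G) = inf_paths G"
proof -
  have "x \<in> cylinder G (x deg_zero deg_zero)" "x deg_zero deg_zero \<in> mor G" if "x \<in> inf_paths G" for x
    using IP[OF kg that, of deg_zero deg_zero] that unfolding cylinder_def by auto
  then show ?thesis unfolding path_topology_def using cyl_sub by auto
qed

lemma cyl_open: "l \<in> mor G \<Longrightarrow> openin (path_topology G) (cylinder G l)"
  unfolding path_topology_def by (rule topology_generated_by_Basis) simp

lemma cyl_compl_open: assumes l: "l \<in> mor G"
  shows "openin (path_topology G) (inf_paths G - cylinder G l)"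
proof -
  have "inf_paths G - cylinder G l = \<Union> (cylinder G ` {b \<in> mor G. deg G b = deg G l \<and> b \<noteq> l})"
  proof safe
    fix x assume x: "x \<in> inf_paths G" "x \<notin> cylinder G l"
    have a: "x \<in> cylinder G (x deg_zero (deg G l))" using x(1) IP(2)[OF kg x(1), of deg_zero "deg G l"] unfolding cylinder_def by simp
    have b: "x deg_zero (deg G l) \<in> {b \<in> mor G. deg G b = deg G l \<and> b \<noteq> l}"
      using IP[OF kg x(1), of deg_zero "deg G l"] x unfolding cylinder_def by auto
    show "x \<in> \<Union> (cylinder G ` {b \<in> mor G. deg G b = deg G l \<and> b \<noteq> l})"
      using a b by blast
  next
    fix x b assume "x \<in> cylinder G b" "b \<in> mor G" "deg G b = deg G l" "b \<noteq> l"
    then show "x \<in> inf_paths G" "x \<in> cylinder G l \<Longrightarrow> False" unfolding cylinder_def by auto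
  qed
  then show ?thesis using cyl_open by (auto intro!: openin_Union)
qed

lemma cyl_indicator_cont: assumes l: "l \<in> mor G"
  shows "continuous_map (path_topology G) euclideanreal (indicator (cylinder G l))"
  unfolding continuous_map_def
proof safe
  fix U :: "real set" assume "openin euclideanreal U"
  let ?S = "cylinder G l"
  have eq: "{x \<in> topspace (path_topology G). indicator ?S x \<in> U} =
     (if 1 \<in> U then ?S else {}) \<union> (if 0 \<in> U then inf_paths G - ?S else {})"
    using cyl_sub topspace_path by (auto simp: indicator_def)
  then show "openin (path_topology G) {x \<in> topspace (path_topology G). indicator ?S x \<in> U}"
  proof -
    have o1: "openin (path_topology G) (if 1 \<in> U then ?S else {})" using cyl_open[OF l] by simp
    have o2: "openin (path_topology G) (if 0 \<in> U then inf_paths G - ?S else {})" using cyl_compl_open[OF l] by simp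
    show ?thesis by (subst eq) (rule openin_Un[OF o1 o2])
  qed
qed auto

end


theorem corollary6p9:
  fixes G :: "('a, 'k::finite) kgraph"
    and phi :: "'k \<Rightarrow> (('k \<Rightarrow> nat) \<Rightarrow> ('k \<Rightarrow> nat) \<Rightarrow> 'a) \<Rightarrow> real"
    and lam :: "'k \<Rightarrow> real"
    and \<mu> :: "(('k \<Rightarrow> nat) \<Rightarrow> ('k \<Rightarrow> nat) \<Rightarrow> 'a) measure"
  assumes kg: "is_kgraph G"
    and sf: "source_free G"
    and fin: "finite_kgraph G"
    and prim: "primitive G"
    and ne: "mor G \<noteq> {}"
    and cont: "\<And>i. continuous_map (path_topology G) euclideanreal (phi i)"
    and cocycle: "\<And>i j x. x \<in> inf_paths G \<Longrightarrow>
        phi i x + phi j (shift i x) = phi j x + phi i (shift j x)"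
    and unique: "\<exists>!s. is_eigen_solution G phi s"
    and sol: "is_eigen_solution G phi (lam, \<mu>)"
  shows "\<forall>l \<in> mor G. measure \<mu> (cylinder G l) > 0"
proof -
  have lpos: "\<And>i. lam i > 0" and ps: "prob_space \<mu>" and sets: "sets \<mu> = sets (path_borel G)"
    and eig: "\<And>i f. continuous_map (path_topology G) euclideanreal f \<Longrightarrow>
          (\<integral>x. ruelle G i (phi i) f x \<partial>\<mu>) = lam i * (\<integral>x. f x \<partial>\<mu>)"
    using sol unfolding is_eigen_solution_def by auto
  interpret prob_space \<mu> by (rule ps)
  have opsub: "{U. openin (path_topology G) U} \<subseteq> Pow (inf_paths G)"
    using openin_subset topspace_path[OF kg] by auto
  have sp: "space \<mu> = inf_paths G"
    using sets_eq_imp_space_eq[OF sets] opsub unfolding path_borel_def by simp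
  have cylS: "cylinder G l \<in> sets \<mu>" if "l \<in> mor G" for l
  proof -
    have "cylinder G l \<in> sigma_sets (inf_paths G) {U. openin (path_topology G) U}"
      using cyl_open[OF kg that] by (intro sigma_sets.Basic) simp
    then show ?thesis using sets sets_measure_of[OF opsub] unfolding path_borel_def by simp
  qed
  have step: "measure \<mu> (cylinder G l') = 0"
    if lam: "e \<in> mor G" "l' \<in> mor G" "src G e = rng G l'" "deg G e = unit_vec i"
      and z: "measure \<mu> (cylinder G (cmp G e l')) = 0" for e l' i
  proof -
    let ?N = "cylinder G (cmp G e l')"
    let ?f = "\<lambda>y. indicator ?N y * exp (- phi i y)"
    have lm: "cmp G e l' \<in> mor G" using K2(1)[OF kg lam(1-3)] .
    have ce: "continuous_map euclideanreal euclideanreal exp"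
      by (simp add: continuous_on_exp continuous_on_id)
    have c2: "continuous_map (path_topology G) euclideanreal (\<lambda>y. exp (- phi i y))"
      using continuous_map_compose[OF continuous_map_minus[OF cont[of i]] ce] by (simp add: o_def)
    have cf: "continuous_map (path_topology G) euclideanreal ?f"
      by (rule continuous_map_real_mult[OF cyl_indicator_cont[OF kg lm] c2])
    have nul: "?N \<in> null_sets \<mu>"
      using cylS[OF lm] z emeasure_eq_measure by (simp add: null_sets_def)
    have "AE x in \<mu>. ?f x = 0"
      using AE_not_in[OF nul] by eventually_elim (simp add: indicator_def)
    then have "(\<integral>x. ?f x \<partial>\<mu>) = 0" by (rule integral_eq_zero_AE)
    then have "(\<integral>x. ruelle G i (phi i) ?f x \<partial>\<mu>) = 0" using eig[OF cf] by simp
    moreover have "(\<integral>x. ruelle G i (phi i) ?f x \<partial>\<mu>) = (\<integral>x. indicator (cylinder G l') x \<partial>\<mu>)"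
      by (rule Bochner_Integration.integral_cong) (use ruelle_ind[OF kg fin lam] sp in auto)
    moreover have "(\<integral>x. indicator (cylinder G l') x \<partial>\<mu>) = measure \<mu> (cylinder G l')"
      using cyl_sub[OF kg, of l'] sp by (simp add: Int_absorb2)
    ultimately show ?thesis by simp
  qed
  have peel: "\<And>l. l \<in> mor G \<Longrightarrow> (\<Sum>j\<in>UNIV. deg G l j) = s \<Longrightarrow> measure \<mu> (cylinder G l) = 0
      \<Longrightarrow> measure \<mu> (cylinder G (src G l)) = 0" for s
  proof (induction s rule: less_induct)
    case (less s l)
    show ?case
    proof (cases "deg G l = deg_zero")
      case True
      then show ?thesis using deg_zero_vertex(2)[OF kg less.prems(1) True] less.prems by simp
    next
      case False
      then obtain i where i: "deg G l i \<noteq> 0" unfolding deg_zero_def by auto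
      have ul: "unit_vec i \<le> deg G l" using i unfolding unit_vec_def le_fun_def by auto
      have "deg G l = deg_add (unit_vec i) (deg_sub (deg G l) (unit_vec i))" using deg_add_sub[OF ul] by simp
      then obtain e l' where el: "e \<in> mor G" "l' \<in> mor G" "src G e = rng G l'" "deg G e = unit_vec i"
        "deg G l' = deg_sub (deg G l) (unit_vec i)" "cmp G e l' = l"
        using K4ex[OF kg less.prems(1)] by blast
      have z': "measure \<mu> (cylinder G l') = 0" using step[OF el(1-4)] el(6) less.prems(3) by simp
      have dl: "deg G l = deg_add (unit_vec i) (deg G l')" using K2(4)[OF kg el(1-3)] el by simp
      have "(\<Sum>j\<in>UNIV. deg G l j) = (\<Sum>j\<in>UNIV. unit_vec i j) + (\<Sum>j\<in>UNIV. deg G l' j)"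
        unfolding dl deg_add_def by (simp add: sum.distrib)
      also have "(\<Sum>j\<in>UNIV. unit_vec i j) = 1" by (simp add: unit_vec_def)
      finally have ss: "(\<Sum>j\<in>UNIV. deg G l' j) < s" using less.prems(2) by simp
      have "src G l' = src G l" using K2(3)[OF kg el(1-3)] el(6) by simp
      then show ?thesis using less.IH[OF ss el(2) refl z'] by simp
    qed
  qed
  show ?thesis
  proof (rule ccontr)
    assume "\<not> ?thesis"
    then obtain l where l: "l \<in> mor G" "\<not> measure \<mu> (cylinder G l) > 0" by blast
    then have z: "measure \<mu> (cylinder G l) = 0" using measure_nonneg[of \<mu> "cylinder G l"] by linarith
    define u where "u = src G l"
    have um: "u \<in> mor G" "rng G u = u" using K1[OF kg l(1)] unfolding u_def by auto
    have du: "deg G u = deg_zero" using vertex_deg[OF kg um] .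
    have zu: "measure \<mu> (cylinder G u) = 0" using peel[OF l(1) refl z] unfolding u_def .
    obtain n where n: "\<forall>v \<in> vertices G. \<forall>w \<in> vertices G. \<exists>g \<in> mor G. rng G g = v \<and> deg G g = n \<and> src G g = w"
      using prim unfolding primitive_def by blast
    have uV: "u \<in> vertices G" using um unfolding vertices_def by simp
    have zw: "measure \<mu> (cylinder G w) = 0" if w: "w \<in> vertices G" for w
    proof -
      obtain g where g: "g \<in> mor G" "rng G g = u" "src G g = w" using n uV w by blast
      have sub: "cylinder G g \<subseteq> cylinder G u"
      proof
        fix x assume x: "x \<in> cylinder G g"
        then have xi: "x \<in> inf_paths G" and xg: "x deg_zero (deg G g) = g" unfolding cylinder_def by auto
        have "x deg_zero deg_zero = u" using IP(3)[OF kg xi deg_zero_le, of "deg G g"] xg g(2) by simp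
        then show "x \<in> cylinder G u" using xi du unfolding cylinder_def by simp
      qed
      have "measure \<mu> (cylinder G g) \<le> measure \<mu> (cylinder G u)"
        by (rule finite_measure_mono[OF sub cylS[OF um(1)]])
      then have "measure \<mu> (cylinder G g) = 0" using zu measure_nonneg[of \<mu> "cylinder G g"] by linarith
      then show ?thesis using peel[OF g(1) refl] g(3) by simp
    qed
    have Vfin: "finite (vertices G)"
    proof (rule finite_subset)
      show "vertices G \<subseteq> {l \<in> mor G. deg G l = deg_zero}"
        using vertex_deg[OF kg] unfolding vertices_def by auto
      show "finite {l \<in> mor G. deg G l = deg_zero}" using fin unfolding finite_kgraph_def by blast
    qed
    have VS: "\<And>w. w \<in> vertices G \<Longrightarrow> cylinder G w \<in> sets \<mu>" using cylS unfolding vertices_def by auto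
    have cover: "space \<mu> \<subseteq> (\<Union>w\<in>vertices G. cylinder G w)"
    proof
      fix x assume "x \<in> space \<mu>"
      then have xi: "x \<in> inf_paths G" using sp by simp
      have w: "x deg_zero deg_zero \<in> vertices G"
        using IP[OF kg xi, of deg_zero deg_zero] unfolding vertices_def by simp
      have "x \<in> cylinder G (x deg_zero deg_zero)"
        using IP(2)[OF kg xi, of deg_zero deg_zero] xi unfolding cylinder_def by simp
      then show "x \<in> (\<Union>w\<in>vertices G. cylinder G w)" using w by blast
    qed
    have "measure \<mu> (space \<mu>) \<le> measure \<mu> (\<Union>w\<in>vertices G. cylinder G w)"
      by (rule finite_measure_mono[OF cover]) (use Vfin VS in auto)
    also have "\<dots> \<le> (\<Sum>w\<in>vertices G. measure \<mu> (cylinder G w))"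
      by (rule measure_UNION_le[OF Vfin VS])
    also have "\<dots> = 0" using zw by simp
    finally show False using prob_space by simp
  qed
qed


end
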